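(* There is a function $q(k)\in\Theta(k^2)$ such that the following holds. Let $G$ be a graph, let $k$ be the number of robots of a CSMP instance on $G$, and let $G'$ be an $(r,q(k))$-meta-haven of $G$ with $r\le 2k$. Let $S\subseteq\mathcal R$ be a set of robots located on vertices of $G'$ in configuration $\iota$, and assume no robot outside $S$ is located on a vertex of $G'$. Then for every configuration $\iota'$ of $S$ with respect to $G'$, there is a sequence of $O(k^7)$ sliding moves, each along a path of $G'$, that transforms $\iota$ into $\iota'$.
   Context: Robots and sliding moves: robots occupy pairwise distinct vertices of $G$; a sliding move moves one robot along a simple path of $G$ from its current vertex to another vertex such that no other robot is located on any vertex of that path, all other robots staying put. For a set $S$ of robots and a subgraph $H$ of $G$, a configuration of $S$ with respect to $H$ is an injection $\iota:S\to V(H)$. The length of a path is its number of edges; for a path $P$ and vertices $u,v$ on it, the $P$-distance between $u$ and $v$ is the length of the subpath of $P$ between $u$ and $v$. Havens: for $q\in\mathbb N$, a vertex $w$ of degree at least three in $G$ lying on a path $P$ of length $q$ is a $q$-anchor, and $P$ is a $q$-haven anchored at $w$. $P$ is a $q$-haven for a vertex $v$ (anchored at $w$) if $v$ lies on $P$ and has $P$-distance at least $\lceil q/3\rceil$ and at most $\lfloor 2q/3\rfloor$ from $w$. $P$ is a strong $q$-haven anchored at $w$ if it is a $q$-haven anchored at $w$ for both endpoints of $P$. For a strong $q$-haven $H_w$ anchored at $w$, $\hat H_w$ is the union of $H_w$ and an arbitrarily chosen set of three edges of $G$ incident to $w$. A connected subgraph $G'$ of $G$ is an $(r,q)$-meta-haven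 if it is the union of the edge sets of graphs $\hat H_{w_1},\dots,\hat H_{w_r}$, where each $H_{w_i}$ is a strong $q$-haven anchored at $w_i$. *)

theory Defs
  imports Main "HOL-Library.Landau_Symbols"
begin

definition graph :: "'a set \<Rightarrow> 'a set set \<Rightarrow> bool" where
  "graph V E \<longleftrightarrow> finite V \<and> (\<forall>e\<in>E. \<exists>u v. u \<noteq> v \<and> u \<in> V \<and> v \<in> V \<and> e = {u, v})"

definition degree :: "'a set set \<Rightarrow> 'a \<Rightarrow> nat" where
  "degree E w = card {e\<in>E. w \<in> e}"

text \<open>A simple path, as the (nonempty, duplicate-free) list of its vertices;
its length is the number of edges, i.e. length p - 1.\<close>
definition is_path :: "'a set set \<Rightarrow> 'a list \<Rightarrow> bool" where
  "is_path E p \<longleftrightarrow> p \<noteq> [] \<and> distinct p \<and> (\<forall>i. Suc i < length p \<longrightarrow> {p ! i, p ! Suc i} \<in> E)"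

definition path_edges :: "'a list \<Rightarrow> 'a set set" where
  "path_edges p = {{p ! i, p ! Suc i} | i. Suc i < length p}"

definition connected_graph :: "'a set \<Rightarrow> 'a set set \<Rightarrow> bool" where
  "connected_graph V E \<longleftrightarrow> (\<forall>u\<in>V. \<forall>v\<in>V. \<exists>p. is_path E p \<and> set p \<subseteq> V \<and> hd p = u \<and> last p = v)"

definition path_dist :: "'a list \<Rightarrow> 'a \<Rightarrow> 'a \<Rightarrow> nat \<Rightarrow> bool" where
  "path_dist P u v d \<longleftrightarrow> (\<exists>i j. i < length P \<and> j < length P \<and> P ! i = u \<and> P ! j = v \<and>
      d = (if i \<le> j then j - i else i - j))"

definition haven :: "'a set set \<Rightarrow> nat \<Rightarrow> 'a \<Rightarrow> 'a list \<Rightarrow> bool" where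
  "haven E q w P \<longleftrightarrow> is_path E P \<and> length P = q + 1 \<and> w \<in> set P \<and> degree E w \<ge> 3"

text \<open>P is a q-haven for v anchored at w; note ceil(q/3) = (q+2) div 3 and
floor(2q/3) = (2q) div 3.\<close>
definition haven_for :: "'a set set \<Rightarrow> nat \<Rightarrow> 'a \<Rightarrow> 'a list \<Rightarrow> 'a \<Rightarrow> bool" where
  "haven_for E q w P v \<longleftrightarrow> haven E q w P \<and> v \<in> set P \<and>
     (\<exists>d. path_dist P v w d \<and> (q + 2) div 3 \<le> d \<and> d \<le> (2 * q) div 3)"

definition strong_haven :: "'a set set \<Rightarrow> nat \<Rightarrow> 'a \<Rightarrow> 'a list \<Rightarrow> bool" where
  "strong_haven E q w P \<longleftrightarrow> haven_for E q w P (hd P) \<and> haven_for E q w P (last P)"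

definition hat_haven_edges :: "'a set set \<Rightarrow> nat \<Rightarrow> 'a \<Rightarrow> 'a list \<Rightarrow> 'a set set \<Rightarrow> 'a set set \<Rightarrow> bool" where
  "hat_haven_edges E q w P T F \<longleftrightarrow> strong_haven E q w P \<and> T \<subseteq> E \<and> card T = 3 \<and>
     (\<forall>e\<in>T. w \<in> e) \<and> F = path_edges P \<union> T"

definition meta_haven :: "'a set \<Rightarrow> 'a set set \<Rightarrow> nat \<Rightarrow> nat \<Rightarrow> 'a set \<Rightarrow> 'a set set \<Rightarrow> bool" where
  "meta_haven V E r q V' E' \<longleftrightarrow>
     (\<exists>hs :: ('a \<times> 'a list \<times> 'a set set) list. length hs = r \<and>
        (\<forall>(w, P, T) \<in> set hs. hat_haven_edges E q w P T (path_edges P \<union> T)) \<and>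
        E' = (\<Union>(w, P, T) \<in> set hs. path_edges P \<union> T)) \<and>
     V' = \<Union>E' \<and> connected_graph V' E'"

definition sliding_move :: "'a set set \<Rightarrow> 'r set \<Rightarrow> ('r \<Rightarrow> 'a) \<Rightarrow> ('r \<Rightarrow> 'a) \<Rightarrow> bool" where
  "sliding_move E R c c' \<longleftrightarrow>
     (\<exists>x\<in>R. \<exists>p. is_path E p \<and> length p \<ge> 2 \<and> hd p = c x \<and> last p = c' x \<and>
        (\<forall>y\<in>R. y \<noteq> x \<longrightarrow> c y \<notin> set p \<and> c' y = c y))"

definition move_sequence :: "'a set set \<Rightarrow> 'r set \<Rightarrow> ('r \<Rightarrow> 'a) list \<Rightarrow> bool" where
  "move_sequence E R cs \<longleftrightarrow> cs \<noteq> [] \<and> (\<forall>i. Suc i < length cs \<longrightarrow> sliding_move E R (cs ! i) (cs ! Suc i))"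

end

theory Submission
  imports Defs "HOL-Real_Asymp.Real_Asymp"
begin

lemma is_path_map:
  assumes "\<iota> \<noteq> []" "distinct \<iota>" "inj_on f (set \<iota>)"
    "\<And>i. Suc i < length \<iota> \<Longrightarrow> {f (\<iota>!i), f (\<iota>!Suc i)} \<in> E"
  shows "is_path E (map f \<iota>)"
  using assms by (auto simp: is_path_def distinct_map)

lemma is_path_rev:
  assumes "is_path E p" shows "is_path E (rev p)"
  unfolding is_path_def
proof (intro conjI allI impI)
  show "rev p \<noteq> []" "distinct (rev p)" using assms by (auto simp: is_path_def)
  fix i assume i: "Suc i < length (rev p)"
  have e: "{p ! (length p - Suc (Suc i)), p ! Suc (length p - Suc (Suc i))} \<in> E"
    using assms i by (auto simp: is_path_def)
  have "Suc (length p - Suc (Suc i)) = length p - Suc i" using i by simp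
  with e show "{rev p ! i, rev p ! Suc i} \<in> E" using i
    by (simp add: rev_nth insert_commute)
qed

lemma slide_path:
  assumes "is_path E p" "2 \<le> length p" "x \<in> R" "c x = hd p"
    "\<forall>y\<in>R. y \<noteq> x \<longrightarrow> c y \<notin> set p"
  shows "sliding_move E R c (c(x := last p))"
  unfolding sliding_move_def using assms by (intro bexI[of _ x] exI[of _ p]) auto

lemma sliding_move_rev:
  assumes "sliding_move E R c c'" shows "sliding_move E R c' c"
proof -
  obtain x p where x: "x \<in> R" "is_path E p" "length p \<ge> 2" "hd p = c x" "last p = c' x"
    "\<forall>y\<in>R. y \<noteq> x \<longrightarrow> c y \<notin> set p \<and> c' y = c y"
    using assms unfolding sliding_move_def by blast
  have "p \<noteq> []" using x by auto
  then show ?thesis unfolding sliding_move_def using x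
    by (intro bexI[of _ x] exI[of _ "rev p"]) (auto simp: is_path_rev hd_rev last_rev)
qed

lemma sliding_move_cong:
  assumes "sliding_move E R c c'" "\<forall>x\<in>R. c x = d x" "\<forall>x\<in>R. c' x = d' x"
  shows "sliding_move E R d d'"
  using assms unfolding sliding_move_def by (metis (no_types, lifting))

inductive msteps :: "nat set set \<Rightarrow> nat set \<Rightarrow> (nat \<Rightarrow> nat) \<Rightarrow> (nat \<Rightarrow> nat) \<Rightarrow> nat \<Rightarrow> bool"
  for E R where
  ms_refl: "msteps E R c c 0"
| ms_step: "sliding_move E R c c1 \<Longrightarrow> msteps E R c1 c2 n \<Longrightarrow> msteps E R c c2 (Suc n)"

lemma ms_trans: "msteps E R c c1 n \<Longrightarrow> msteps E R c1 c2 m \<Longrightarrow> msteps E R c c2 (n + m)"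
  by (induction rule: msteps.induct) (auto intro: ms_step)

lemma ms_snoc: "msteps E R c c1 n \<Longrightarrow> sliding_move E R c1 c2 \<Longrightarrow> msteps E R c c2 (Suc n)"
  using ms_trans[of E R c c1 n c2 1] ms_step[OF _ ms_refl] by simp

lemma ms_sym: "msteps E R c c1 n \<Longrightarrow> msteps E R c1 c n"
  by (induction rule: msteps.induct) (auto intro: ms_refl ms_snoc sliding_move_rev)

lemma ms_cong: "msteps E R c c' n \<Longrightarrow> \<forall>x\<in>R. c x = d x \<Longrightarrow> \<exists>d'. msteps E R d d' n \<and> (\<forall>x\<in>R. d' x = c' x)"
proof (induction arbitrary: d rule: msteps.induct)
  case (ms_refl c)
  then show ?case by (intro exI[of _ d]) (auto intro: msteps.ms_refl)
next
  case (ms_step c c1 c2 n)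
  then show ?case using sliding_move_cong[of E R c c1 d c1] by (auto intro: msteps.ms_step)
qed

lemma ms_seq: "msteps E R c c' n \<Longrightarrow> \<exists>cs. move_sequence E R cs \<and> hd cs = c \<and> last cs = c' \<and> length cs = Suc n"
proof (induction rule: msteps.induct)
  case (ms_refl c) then show ?case by (intro exI[of _ "[c]"]) (auto simp: move_sequence_def)
next
  case (ms_step c c1 c2 n)
  then obtain cs where cs: "move_sequence E R cs" "hd cs = c1" "last cs = c2" "length cs = Suc n" by blast
  have "move_sequence E R (c # cs)" unfolding move_sequence_def
  proof (intro conjI allI impI)
    fix i assume "Suc i < length (c # cs)"
    then show "sliding_move E R ((c # cs) ! i) ((c # cs) ! Suc i)"
      using cs ms_step(1) unfolding move_sequence_def
      by (cases i) (auto simp: hd_conv_nth)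
  qed simp
  then show ?case using cs by (intro exI[of _ "c # cs"]) auto
qed

definition reach where "reach E R c c' n \<longleftrightarrow> (\<exists>n'\<le>n. \<exists>c''. msteps E R c c'' n' \<and> (\<forall>x\<in>R. c'' x = c' x))"

lemma reach_refl: "reach E R c c 0" unfolding reach_def by (auto intro: ms_refl)
lemma reach_mono: "reach E R c c' n \<Longrightarrow> n \<le> m \<Longrightarrow> reach E R c c' m" unfolding reach_def using le_trans by blast
lemma reach_trans: assumes "reach E R c c1 n" "reach E R c1 c2 m" shows "reach E R c c2 (n+m)"
proof -
  obtain n1 d1 where 1: "n1 \<le> n" "msteps E R c d1 n1" "\<forall>x\<in>R. d1 x = c1 x" using assms(1) unfolding reach_def by blast
  obtain n2 d2 where 2: "n2 \<le> m" "msteps E R c1 d2 n2" "\<forall>x\<in>R. d2 x = c2 x" using assms(2) unfolding reach_def by blast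
  obtain d3 where 3: "msteps E R d1 d3 n2" "\<forall>x\<in>R. d3 x = d2 x" using ms_cong[OF 2(2), of d1] 1(3) by auto
  show ?thesis unfolding reach_def using 1 2 3 ms_trans[OF 1(2) 3(1)] by (intro exI[of _ "n1+n2"]) auto
qed
lemma reach_cong: assumes "reach E R c c' n" "\<forall>x\<in>R. c x = d x" "\<forall>x\<in>R. c' x = d' x" shows "reach E R d d' n"
proof -
  obtain n1 d1 where 1: "n1 \<le> n" "msteps E R c d1 n1" "\<forall>x\<in>R. d1 x = c' x" using assms(1) unfolding reach_def by blast
  obtain d3 where 3: "msteps E R d d3 n1" "\<forall>x\<in>R. d3 x = d1 x" using ms_cong[OF 1(2), of d] assms(2) by auto
  show ?thesis unfolding reach_def using 1 3 assms(3) by auto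
qed
lemma reach_sym: assumes "reach E R c c1 n" shows "reach E R c1 c n"
proof -
  obtain n1 d1 where 1: "n1 \<le> n" "msteps E R c d1 n1" "\<forall>x\<in>R. d1 x = c1 x" using assms(1) unfolding reach_def by blast
  have "reach E R d1 c n" unfolding reach_def using 1 ms_sym[OF 1(2)] by auto
  then show ?thesis using reach_cong 1(3) by blast
qed
lemma reach_step: "sliding_move E R c c' \<Longrightarrow> reach E R c c' 1"
  unfolding reach_def using ms_step[OF _ ms_refl, of E R c c'] by (intro exI[of _ 1]) auto

lemma reach_seq: assumes "reach E R c c' n"
  shows "\<exists>cs. move_sequence E R cs \<and> hd cs = c \<and> (\<forall>x\<in>R. last cs x = c' x) \<and> length cs - 1 \<le> n"
proof -
  obtain n1 d1 where 1: "n1 \<le> n" "msteps E R c d1 n1" "\<forall>x\<in>R. d1 x = c' x" using assms(1) unfolding reach_def by blast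
  from ms_seq[OF 1(2)] 1 show ?thesis by force
qed

lemma is_path_take: "is_path E p \<Longrightarrow> 0 < k \<Longrightarrow> is_path E (take k p)"
  unfolding is_path_def by auto

lemma is_path_drop: "is_path E p \<Longrightarrow> k < length p \<Longrightarrow> is_path E (drop k p)"
  unfolding is_path_def by (auto simp: add.commute add_Suc_right)

lemma cascade:
  assumes "is_path E p" "set p \<subseteq> V" "hd p \<notin> c ` R" "last p \<in> c ` S" "S \<subseteq> R" "inj_on c R"
    "\<forall>x\<in>R. c x \<in> V \<longleftrightarrow> x \<in> S"
  shows "\<exists>c'. reach E R c c' (length p) \<and> inj_on c' R \<and> (\<forall>x\<in>R. c' x \<in> V \<longleftrightarrow> x \<in> S)
           \<and> c' ` S = insert (hd p) (c ` S - {last p}) \<and> (\<forall>x\<in>R-S. c' x = c x)"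
  using assms
proof (induction "length p" arbitrary: p c rule: less_induct)
  case less
  define n where "n = length p"
  have pne: "p \<noteq> []" and dist: "distinct p" using less.prems by (auto simp: is_path_def)
  have hd0: "hd p = p ! 0" and lastn: "last p = p ! (n - 1)" using pne by (auto simp: n_def hd_conv_nth last_conv_nth)
  have n1: "n - 1 < n" using pne n_def by auto
  have ex: "\<exists>i. 0 < i \<and> i < n \<and> p ! i \<in> c ` R"
  proof -
    have "n - 1 \<noteq> 0"
    proof
      assume "n - 1 = 0" then have "hd p = last p" using hd0 lastn by simp
      then show False using less.prems(3,4,5) by auto
    qed
    then show ?thesis using n1 less.prems(4,5) lastn by (intro exI[of _ "n-1"]) auto
  qed
  define i where "i = (LEAST i. 0 < i \<and> i < n \<and> p ! i \<in> c ` R)"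
  have i: "0 < i" "i < n" "p ! i \<in> c ` R" using LeastI_ex[OF ex] unfolding i_def by auto
  have imin: "\<And>l. 0 < l \<Longrightarrow> l < i \<Longrightarrow> p ! l \<notin> c ` R"
    using not_less_Least[of _ "\<lambda>i. 0 < i \<and> i < n \<and> p ! i \<in> c ` R"] i(2) unfolding i_def
    by (metis order.strict_trans)
  obtain x where x: "x \<in> R" "c x = p ! i" using i(3) by auto
  have xS: "x \<in> S" using x less.prems(2,7) i(2) n_def by (metis nth_mem subsetD)
  define p1 where "p1 = rev (take (Suc i) p)"
  have p1path: "is_path E p1" unfolding p1_def by (intro is_path_rev is_path_take less.prems(1)) simp
  have p1len: "2 \<le> length p1" using i n_def by (simp add: p1_def)
  have p1hd: "hd p1 = p ! i" using i n_def by (simp add: p1_def hd_rev take_Suc_conv_app_nth)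
  have p1last: "last p1 = hd p" using i n_def pne by (simp add: p1_def last_rev hd_conv_nth)
  have p1free: "\<forall>y\<in>R. y \<noteq> x \<longrightarrow> c y \<notin> set p1"
  proof (intro ballI impI notI)
    fix y assume y: "y \<in> R" "y \<noteq> x" and yin: "c y \<in> set p1"
    have "set p1 = set (take (Suc i) p)" by (simp add: p1_def)
    then obtain l where l: "l < Suc i" "c y = p ! l" using yin i n_def
      by (auto simp: in_set_conv_nth)
    have cyR: "c y \<in> c ` R" using y by simp
    consider "l = 0" | "l = i" | "0 < l \<and> l < i" using l by linarith
    then show False
    proof cases
      case 1 then show False using l cyR less.prems(3) hd0 by simp
    next
      case 2
      then have "c y = c x" using l x by simp
      then have "y = x" using inj_onD[OF less.prems(6)] y(1) x(1) by blast
      then show False using y by simp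
    next
      case 3 then show False using imin[of l] l cyR by simp
    qed
  qed
  define c1 where "c1 = c(x := hd p)"
  have mv: "reach E R c c1 1" unfolding c1_def
    using reach_step[OF slide_path[OF p1path p1len x(1) _ p1free]] x p1hd p1last by simp
  have c1inj: "inj_on c1 R" unfolding c1_def by (rule inj_on_fun_updI[OF less.prems(6) less.prems(3)])
  have hdV: "hd p \<in> V" using less.prems(2) pne by auto
  have c1V: "\<forall>y\<in>R. c1 y \<in> V \<longleftrightarrow> y \<in> S" using less.prems(7) hdV xS unfolding c1_def by auto
  have c1S: "c1 ` S = insert (hd p) (c ` S - {p ! i})"
  proof -
    have "\<And>y. y \<in> S \<Longrightarrow> y \<noteq> x \<Longrightarrow> c y \<noteq> p ! i"
    proof
      fix y assume "y \<in> S" "y \<noteq> x" "c y = p ! i"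
      then have "c y = c x" "y \<in> R" using x less.prems(5) by auto
      then show False using inj_onD[OF less.prems(6)] x(1) \<open>y \<noteq> x\<close> by blast
    qed
    then show ?thesis using xS x unfolding c1_def by auto
  qed
  have c1RS: "\<forall>y\<in>R-S. c1 y = c y" using xS unfolding c1_def by auto
  show ?case
  proof (cases "i = n - 1")
    case True
    have "reach E R c c1 (length p)" using reach_mono[OF mv, of "length p"] n_def i by simp
    moreover have "c1 ` S = insert (hd p) (c ` S - {last p})" using c1S lastn True by simp
    ultimately show ?thesis using c1inj c1V c1RS by blast
  next
    case False
    define p' where "p' = drop i p"
    have lt: "length p' < length p" using i n_def by (simp add: p'_def)
    have p'path: "is_path E p'" using is_path_drop less.prems(1) i n_def by (simp add: p'_def)
    have p'V: "set p' \<subseteq> V" using less.prems(2) by (auto simp: p'_def dest: in_set_dropD)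
    have hdp': "hd p' = p ! i" using i n_def by (simp add: p'_def hd_drop_conv_nth)
    have lastp': "last p' = last p" using i n_def by (simp add: p'_def)
    have ne1: "hd p \<noteq> p ! i" using hd0 nth_eq_iff_index_eq[OF dist, of 0 i] i n_def pne by simp
    have ne2: "last p \<noteq> p ! i" using lastn nth_eq_iff_index_eq[OF dist, of "n - 1" i] i n_def False by simp
    have h3: "hd p' \<notin> c1 ` R"
    proof
      assume "hd p' \<in> c1 ` R"
      then obtain y where y: "y \<in> R" "c1 y = p ! i" using hdp' by auto
      show False
      proof (cases "y = x")
        case True then show False using y ne1 by (simp add: c1_def)
      next
        case False
        then have "c y = c x" using y x by (simp add: c1_def)
        then show False using inj_onD[OF less.prems(6)] x(1) y(1) False by blast
      qed
    qed
    have h4: "last p' \<in> c1 ` S" using c1S lastp' less.prems(4) ne2 by auto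
    obtain c' where c': "reach E R c1 c' (length p')" "inj_on c' R" "\<forall>y\<in>R. c' y \<in> V \<longleftrightarrow> y \<in> S"
      "c' ` S = insert (hd p') (c1 ` S - {last p'})" "\<forall>y\<in>R-S. c' y = c1 y"
      using less.hyps[OF lt p'path p'V h3 h4 less.prems(5) c1inj c1V] by blast
    have "reach E R c c' (1 + length p')" using reach_trans[OF mv c'(1)] .
    then have r: "reach E R c c' (length p)" by (rule reach_mono) (use lt in simp)
    have piS: "p ! i \<in> c ` S" using imageI[OF xS, of c] x(2) by simp
    have "c' ` S = insert (hd p) (c ` S - {last p})"
    proof -
      have ne3: "hd p \<noteq> last p" using less.prems(3,4,5) by auto
      show ?thesis unfolding c'(4) c1S hdp' lastp' using ne1 ne2 ne3 piS by auto
    qed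
    moreover have "\<forall>y\<in>R-S. c' y = c y" using c'(5) c1RS by simp
    ultimately show ?thesis using r c'(2,3) by blast
  qed
qed

lemma gather_aux:
  assumes "connected_graph V E" "finite V" "finite S" "S \<subseteq> R"
    "D \<subseteq> V" "card D = card S" "inj_on c R" "\<forall>x\<in>R. c x \<in> V \<longleftrightarrow> x \<in> S"
  shows "\<exists>c'. reach E R c c' (card (c ` S - D) * card V) \<and> inj_on c' R \<and> (\<forall>x\<in>R. c' x \<in> V \<longleftrightarrow> x \<in> S) \<and> c' ` S = D \<and> (\<forall>x\<in>R-S. c' x = c x)"
  using assms(7,8)
  proof (induction "card (c ` S - D)" arbitrary: c rule: less_induct)
    case less
    have cardcS: "card (c ` S) = card S" using less.prems(1) assms(4) by (meson card_image inj_on_subset)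
    have finD: "finite D" using assms(2,5) finite_subset by blast
    show ?case
    proof (cases "c ` S - D = {}")
      case True
      then have "c ` S \<subseteq> D" by auto
      then have "c ` S = D" using card_subset_eq[OF finD] cardcS assms(6) by simp
      then show ?thesis using less.prems True by (intro exI[of _ c]) (auto intro: reach_refl)
    next
      case False
      then obtain v where v: "v \<in> c ` S" "v \<notin> D" by auto
      have "\<not> D \<subseteq> c ` S"
      proof
        assume "D \<subseteq> c ` S"
        then have "D = c ` S" using card_subset_eq[of "c ` S" D] assms(3) cardcS assms(6) by auto
        then show False using v by auto
      qed
      then obtain d where d: "d \<in> D" "d \<notin> c ` S" by auto
      have dV: "d \<in> V" using d assms(5) by auto
      have dR: "d \<notin> c ` R" using d dV less.prems(2) by auto
      have vV: "v \<in> V" using v less.prems(2) assms(4) by auto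
      obtain p where p: "is_path E p" "set p \<subseteq> V" "hd p = d" "last p = v"
        using assms(1) dV vV unfolding connected_graph_def by blast
      obtain c1 where c1: "reach E R c c1 (length p)" "inj_on c1 R" "\<forall>x\<in>R. c1 x \<in> V \<longleftrightarrow> x \<in> S"
        "c1 ` S = insert d (c ` S - {v})" "\<forall>x\<in>R-S. c1 x = c x"
        using cascade[OF p(1,2) _ _ assms(4) less.prems] p(3,4) dR v(1) by auto
      have eq: "c1 ` S - D = (c ` S - D) - {v}" using c1(4) d(1) by auto
      have fin: "finite (c ` S - D)" using assms(3) by auto
      have lt: "card (c1 ` S - D) < card (c ` S - D)" unfolding eq by (rule card_Diff1_less[OF fin]) (use v in auto)
      obtain c' where c': "reach E R c1 c' (card (c1 ` S - D) * card V)" "inj_on c' R"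
        "\<forall>x\<in>R. c' x \<in> V \<longleftrightarrow> x \<in> S" "c' ` S = D" "\<forall>x\<in>R-S. c' x = c1 x"
        using less.hyps[OF lt c1(2,3)] by blast
      have "distinct p" using p(1) by (simp add: is_path_def)
      then have "length p = card (set p)" by (simp add: distinct_card)
      also have "... \<le> card V" by (rule card_mono[OF assms(2) p(2)])
      finally have lp: "length p \<le> card V" .
      have "Suc (card (c1 ` S - D)) \<le> card (c ` S - D)" using lt by simp
      then have "Suc (card (c1 ` S - D)) * card V \<le> card (c ` S - D) * card V" by (rule mult_le_mono1)
      then have "card (c1 ` S - D) * card V + length p \<le> card (c ` S - D) * card V"
        using lp by simp
      then have "reach E R c c' (card (c ` S - D) * card V)"
        using reach_mono[OF reach_trans[OF c1(1) c'(1)]] by (simp add: add.commute)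
      moreover have "\<forall>x\<in>R-S. c' x = c x" using c'(5) c1(5) by simp
      ultimately show ?thesis using c'(2,3,4) by blast
    qed
  qed

lemma gather:
  assumes "connected_graph V E" "finite V" "finite S" "S \<subseteq> R" "inj_on c R" "\<forall>x\<in>R. c x \<in> V \<longleftrightarrow> x \<in> S"
    "D \<subseteq> V" "card D = card S"
  shows "\<exists>c'. reach E R c c' (card S * card V) \<and> inj_on c' R \<and> (\<forall>x\<in>R. c' x \<in> V \<longleftrightarrow> x \<in> S) \<and> c' ` S = D \<and> (\<forall>x\<in>R-S. c' x = c x)"
proof -
  have "card (c ` S - D) \<le> card (c ` S)" using assms(3) by (simp add: card_mono)
  also have "... \<le> card S" by (rule card_image_le[OF assms(3)])
  finally have "card (c ` S - D) \<le> card S" .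
  moreover obtain c' where r: "reach E R c c' (card (c ` S - D) * card V)" "inj_on c' R"
    "\<forall>x\<in>R. c' x \<in> V \<longleftrightarrow> x \<in> S" "c' ` S = D" "\<forall>x\<in>R-S. c' x = c x"
    using gather_aux[OF assms(1-4,7,8,5,6)] by blast
  ultimately have "reach E R c c' (card S * card V)" using reach_mono[OF r(1)] mult_le_mono1 by blast
  then show ?thesis using \<open>inj_on c' R\<close> \<open>\<forall>x\<in>R. c' x \<in> V \<longleftrightarrow> x \<in> S\<close> \<open>c' ` S = D\<close> \<open>\<forall>x\<in>R-S. c' x = c x\<close> by blast
qed

locale tj =
  fixes E :: "nat set set" and R S V :: "nat set" and Q :: "nat list" and b m s :: nat
  assumes Qpath: "is_path E Q" and bQ: "b \<notin> set Q" and bedge: "{Q ! m, b} \<in> E"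
    and sm: "s \<le> m" and ms: "m + s < length Q" and QV: "set Q \<subseteq> V" and bV: "b \<in> V"
    and SR: "S \<subseteq> R" and finS: "finite S" and cardS: "card S = s"
begin

definition vt :: "nat \<Rightarrow> nat" where "vt n = (if n = 0 then b else Q ! (n - 1))"
definition cadj :: "nat \<Rightarrow> nat \<Rightarrow> bool" where
  "cadj n n' \<longleftrightarrow> (1 \<le> n \<and> 1 \<le> n' \<and> (n' = Suc n \<or> n = Suc n')) \<or> (n = 0 \<and> n' = Suc m) \<or> (n = Suc m \<and> n' = 0)"

lemma Qdist: "distinct Q" using Qpath by (simp add: is_path_def)

lemma vt_inj: assumes "n \<le> length Q" "n' \<le> length Q" "vt n = vt n'" shows "n = n'"
proof -
  have nb: "\<And>k. k < length Q \<Longrightarrow> Q ! k \<noteq> b" using bQ nth_mem by metis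
  consider "n = 0" "n' = 0" | "n = 0" "n' \<noteq> 0" | "n \<noteq> 0" "n' = 0" | "n \<noteq> 0" "n' \<noteq> 0" by blast
  then show ?thesis
  proof cases
    case 2
    have "n' - 1 < length Q" using assms(2) 2 by simp
    then show ?thesis using 2 assms nb[of "n' - 1"] unfolding vt_def by simp
  next
    case 3
    have "n - 1 < length Q" using assms(1) 3 by simp
    then show ?thesis using 3 assms nb[of "n - 1"] unfolding vt_def by simp
  next
    case 4
    then have "Q ! (n - 1) = Q ! (n' - 1)" using assms unfolding vt_def by simp
    then have "n - 1 = n' - 1" using nth_eq_iff_index_eq[OF Qdist, of "n - 1" "n' - 1"] assms 4 by simp
    then show ?thesis using 4 by simp
  qed simp
qed

lemma vt_V: "n \<le> length Q \<Longrightarrow> vt n \<in> V"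
  using QV bV unfolding vt_def by (auto simp: subset_iff)

lemma code_path:
  assumes "\<pi> \<noteq> []" "distinct \<pi>" "\<forall>n\<in>set \<pi>. n \<le> length Q"
    "\<And>i. Suc i < length \<pi> \<Longrightarrow> cadj (\<pi> ! i) (\<pi> ! Suc i)"
  shows "is_path E (map vt \<pi>)"
proof (rule is_path_map[OF assms(1,2)])
  show "inj_on vt (set \<pi>)" using assms(3) vt_inj by (auto simp: inj_on_def)
  fix i assume i: "Suc i < length \<pi>"
  have a: "\<pi> ! i \<le> length Q" "\<pi> ! Suc i \<le> length Q" using assms(3) i by auto
  have ed: "\<And>k. Suc k < length Q \<Longrightarrow> {Q ! k, Q ! Suc k} \<in> E" using Qpath by (simp add: is_path_def)
  have mQ: "m < length Q" using ms by simp
  consider (up) "1 \<le> \<pi> ! i" "\<pi> ! Suc i = Suc (\<pi> ! i)" | (dn) "1 \<le> \<pi> ! Suc i" "\<pi> ! i = Suc (\<pi> ! Suc i)"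
    | (z1) "\<pi> ! i = 0" "\<pi> ! Suc i = Suc m" | (z2) "\<pi> ! i = Suc m" "\<pi> ! Suc i = 0"
    using assms(4)[OF i] unfolding cadj_def by auto
  then show "{vt (\<pi> ! i), vt (\<pi> ! Suc i)} \<in> E"
  proof cases
    case up
    then show ?thesis using ed[of "\<pi> ! i - 1"] a unfolding vt_def by auto
  next
    case dn
    then show ?thesis using ed[of "\<pi> ! Suc i - 1"] a unfolding vt_def by (auto simp: insert_commute)
  next
    case z1 then show ?thesis using bedge unfolding vt_def by (auto simp: insert_commute)
  next
    case z2 then show ?thesis using bedge unfolding vt_def by auto
  qed
qed

lemma cpath_up: assumes "1 \<le> a" "a < e" "e \<le> Suc (length Q)" shows "is_path E (map vt [a..<e])"
  using assms by (intro code_path) (auto simp: cadj_def)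

lemma cpath_dn: assumes "1 \<le> a" "a < e" "e \<le> Suc (length Q)" shows "is_path E (map vt (rev [a..<e]))"
  using is_path_rev[OF cpath_up[OF assms]] by (simp add: rev_map)

lemma is_path_cons: assumes "is_path E p" "v \<notin> set p" "{v, hd p} \<in> E" shows "is_path E (v # p)"
  unfolding is_path_def
proof (intro conjI allI impI)
  have pne: "p \<noteq> []" using assms(1) by (simp add: is_path_def)
  show "v # p \<noteq> []" by simp
  show "distinct (v # p)" using assms(1,2) by (simp add: is_path_def)
  fix i assume i: "Suc i < length (v # p)"
  show "{(v # p) ! i, (v # p) ! Suc i} \<in> E"
  proof (cases i)
    case 0 then show ?thesis using assms(3) pne by (simp add: hd_conv_nth)
  next
    case (Suc j) then show ?thesis using assms(1) i by (simp add: is_path_def)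
  qed
qed

lemma cpath_b: assumes "1 \<le> a" "a \<le> Suc m" shows "is_path E (map vt (0 # rev [a..<m+2]))"
proof -
  have mQ: "m < length Q" using ms by simp
  have p: "is_path E (map vt (rev [a..<m+2]))" using assms ms by (intro cpath_dn) auto
  have nb: "b \<notin> set (map vt (rev [a..<m+2]))" using assms bQ mQ by (auto simp: vt_def)
  have "hd (map vt (rev [a..<m+2])) = Q ! m" using assms by (simp add: vt_def hd_map hd_rev)
  then have e: "{b, hd (map vt (rev [a..<m+2]))} \<in> E" using bedge by (simp add: insert_commute)
  show ?thesis using is_path_cons[OF p nb e] by (simp add: vt_def)
qed

lemma cpath_3: assumes "Suc m < length Q" shows "is_path E (map vt [Suc (Suc m), Suc m, 0])"
  using assms by (intro code_path) (auto simp: cadj_def nth_Cons' less_Suc_eq)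

definition Dc where "Dc = {Suc m - s..m}"
definition D where "D = vt ` Dc"

definition cf :: "(nat \<Rightarrow> nat) \<Rightarrow> (nat \<Rightarrow> nat) \<Rightarrow> (nat \<Rightarrow> nat) \<Rightarrow> nat \<Rightarrow> nat" where
  "cf c C f = (\<lambda>y. if y \<in> S then vt (f (C y)) else c y)"

lemma cf_cong: "\<forall>y\<in>S. C y \<in> Dc \<Longrightarrow> \<forall>n\<in>Dc. f n = g n \<Longrightarrow> \<forall>y\<in>R. cf c C f y = cf c C g y"
  unfolding cf_def by auto

lemma code_move:
  assumes cgood: "\<forall>x\<in>R. c x \<in> V \<longleftrightarrow> x \<in> S"
    and C: "inj_on C S" "C ` S = Dc"
    and p: "is_path E (map vt \<pi>)" "2 \<le> length \<pi>" "\<forall>n\<in>set \<pi>. n \<le> length Q"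
    and a: "a \<in> Dc" "hd \<pi> = f a"
    and fQ: "\<forall>n\<in>Dc. f n \<le> length Q"
    and free: "\<forall>n\<in>Dc. n \<noteq> a \<longrightarrow> f n \<notin> set \<pi>"
  shows "reach E R (cf c C f) (cf c C (f(a := last \<pi>))) 1"
proof -
  obtain x where x: "x \<in> S" "C x = a" using a(1) C(2) by force
  have xR: "x \<in> R" using x SR by auto
  have pne: "\<pi> \<noteq> []" using p(2) by auto
  have hd: "cf c C f x = hd (map vt \<pi>)" using x a pne by (simp add: cf_def hd_map)
  have fr: "\<forall>y\<in>R. y \<noteq> x \<longrightarrow> cf c C f y \<notin> set (map vt \<pi>)"
  proof (intro ballI impI)
    fix y assume y: "y \<in> R" "y \<noteq> x"
    show "cf c C f y \<notin> set (map vt \<pi>)"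
    proof (cases "y \<in> S")
      case True
      have Cy: "C y \<in> Dc" "C y \<noteq> a" using True C x y by (auto simp: inj_on_def)
      have "f (C y) \<notin> set \<pi>" using free Cy by auto
      moreover have "f (C y) \<le> length Q" using fQ Cy by auto
      ultimately show ?thesis using True p(3) vt_inj by (auto simp: cf_def)
    next
      case False
      then have "c y \<notin> V" using cgood y by auto
      then show ?thesis using False p(3) vt_V by (auto simp: cf_def)
    qed
  qed
  have sm: "sliding_move E R (cf c C f) ((cf c C f)(x := last (map vt \<pi>)))"
    by (rule slide_path[OF p(1) _ xR hd fr]) (use p(2) in simp)
  have "\<forall>y\<in>R. ((cf c C f)(x := last (map vt \<pi>))) y = cf c C (f(a := last \<pi>)) y"
    using x pne C(1) by (auto simp: cf_def last_map inj_on_def)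
  then show ?thesis using reach_cong[OF reach_step[OF sm]] by blast
qed

end

locale tjc = tj +
  fixes c C :: "nat \<Rightarrow> nat"
  assumes cgood: "\<forall>x\<in>R. c x \<in> V \<longleftrightarrow> x \<in> S" and Cinj: "inj_on C S" and CS: "C ` S = Dc"
begin

abbreviation "cc f \<equiv> cf c C f"

lemma CDc: "\<forall>y\<in>S. C y \<in> Dc" using CS by auto

lemma mv:
  assumes "is_path E (map vt \<pi>)" "2 \<le> length \<pi>" "\<forall>n\<in>set \<pi>. n \<le> length Q"
    "a \<in> Dc" "hd \<pi> = f a" "\<forall>n\<in>Dc. f n \<le> length Q" "\<forall>n\<in>Dc. n \<noteq> a \<longrightarrow> f n \<notin> set \<pi>"
    "\<forall>n\<in>Dc. g n = (f(a := last \<pi>)) n"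
  shows "reach E R (cc f) (cc g) 1"
proof -
  have 1: "reach E R (cc f) (cc (f(a := last \<pi>))) 1" by (rule code_move[OF cgood Cinj CS assms(1-7)])
  have "\<forall>n\<in>Dc. (f(a := last \<pi>)) n = g n" using assms(8) by simp
  then have 2: "\<forall>y\<in>R. cc (f(a := last \<pi>)) y = cc g y" by (rule cf_cong[OF CDc])
  show ?thesis by (rule reach_cong[OF 1 _ 2]) simp
qed

definition F2 where "F2 i J = (\<lambda>n. if n = m then 0 else if m - J \<le> n \<and> n < m then n + i + 2 else n)"
definition G where "G i J = (\<lambda>n. if n = m then m - i else if n = m - i then 0 else if m - i + J < n \<and> n < m then n + i + 2 else n)"

lemma loop2: assumes i: "1 \<le> i" "i < s" shows "J < i \<Longrightarrow> reach E R (cc (F2 i 0)) (cc (F2 i J)) J"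
proof (induction J)
  case 0 show ?case by (rule reach_refl)
next
  case (Suc J)
  have IH: "reach E R (cc (F2 i 0)) (cc (F2 i J)) J" using Suc by simp
  have lQ: "m + s < length Q" by (rule ms)
  have smm: "s \<le> m" by (rule sm)
  have "reach E R (cc (F2 i J)) (cc (F2 i (Suc J))) 1"
  proof (rule mv[of "[m - Suc J..<m + i + 2 - J]" "m - Suc J"])
    show "is_path E (map vt [m - Suc J..<m + i + 2 - J])" using Suc i lQ smm by (intro cpath_up) auto
  qed (use Suc i lQ smm in \<open>auto simp: F2_def Dc_def\<close>)
  from reach_trans[OF IH this] show ?case by simp
qed

lemma loop6: assumes i: "1 \<le> i" "i < s" shows "J < i \<Longrightarrow> reach E R (cc (G i 0)) (cc (G i J)) J"
proof (induction J)
  case 0 show ?case by (rule reach_refl)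
next
  case (Suc J)
  have IH: "reach E R (cc (G i 0)) (cc (G i J)) J" using Suc by simp
  have lQ: "m + s < length Q" by (rule ms)
  have smm: "s \<le> m" by (rule sm)
  have "reach E R (cc (G i J)) (cc (G i (Suc J))) 1"
  proof (rule mv[of "rev [m - i + Suc J..<m - i + Suc J + i + 3]" "m - i + Suc J"])
    show "is_path E (map vt (rev [m - i + Suc J..<m - i + Suc J + i + 3]))" using Suc i lQ smm by (intro cpath_dn) auto
  qed (use Suc i lQ smm in \<open>auto simp: G_def Dc_def last_rev hd_rev\<close>)
  from reach_trans[OF IH this] show ?case by simp
qed

lemma star: assumes i: "1 \<le> i" "i < s"
  shows "reach E R (cc id) (cc (id(m := m - i, m - i := m))) (2 * i + 3)"
proof -
  have lQ: "m + s < length Q" by (rule ms)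
  have smm: "s \<le> m" by (rule sm)
  have s1: "reach E R (cc id) (cc (F2 i 0)) 1"
  proof (rule mv[of "[m, Suc m, 0]" m])
    show "is_path E (map vt [m, Suc m, 0])" using i lQ smm
      by (intro code_path) (auto simp: cadj_def nth_Cons' less_Suc_eq)
  qed (use i lQ smm in \<open>auto simp: F2_def Dc_def\<close>)
  have s2: "reach E R (cc (F2 i 0)) (cc (F2 i (i - 1))) (i - 1)" using loop2[OF i, of "i - 1"] i by simp
  define F3 where "F3 = (F2 i (i - 1))(m - i := m + 2)"
  have s3: "reach E R (cc (F2 i (i - 1))) (cc F3) 1"
  proof (rule mv[of "[m - i..<m + 3]" "m - i"])
    show "is_path E (map vt [m - i..<m + 3])" using i lQ smm by (intro cpath_up) auto
  qed (use i lQ smm in \<open>auto simp: F2_def F3_def Dc_def\<close>)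
  define F4 where "F4 = F3(m := m - i)"
  have s4: "reach E R (cc F3) (cc F4) 1"
  proof (rule mv[of "0 # rev [m - i..<m+2]" m])
    show "is_path E (map vt (0 # rev [m - i..<m + 2]))" using i lQ smm by (intro cpath_b) auto
  qed (use i lQ smm in \<open>auto simp: F2_def F3_def F4_def Dc_def last_rev\<close>)
  define F5 where "F5 = F4(m - i := 0)"
  have s5: "reach E R (cc F4) (cc F5) 1"
  proof (rule mv[of "[Suc (Suc m), Suc m, 0]" "m - i"])
    show "is_path E (map vt [Suc (Suc m), Suc m, 0])" using i lQ by (intro cpath_3) simp
  qed (use i lQ smm in \<open>auto simp: F2_def F3_def F4_def F5_def Dc_def\<close>)
  have s6: "reach E R (cc F5) (cc (G i (i - 1))) (i - 1)"
  proof -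
    have "\<forall>y\<in>R. cc F5 y = cc (G i 0) y"
      by (rule cf_cong[OF CDc]) (use i smm in \<open>auto simp: F2_def F3_def F4_def F5_def G_def Dc_def\<close>)
    then show ?thesis using reach_cong[OF loop6[OF i, of "i - 1"]] i by auto
  qed
  have s7: "reach E R (cc (G i (i - 1))) (cc (id(m := m - i, m - i := m))) 1"
  proof (rule mv[of "[0, Suc m, m]" "m - i"])
    show "is_path E (map vt [0, Suc m, m])" using i lQ smm
      by (intro code_path) (auto simp: cadj_def nth_Cons' less_Suc_eq)
  qed (use i lQ smm in \<open>auto simp: G_def Dc_def\<close>)
  have "reach E R (cc id) (cc (id(m := m - i, m - i := m))) (1 + (i - 1) + 1 + 1 + 1 + (i - 1) + 1)"
    by (rule reach_trans[OF reach_trans[OF reach_trans[OF reach_trans[OF reach_trans[OF reach_trans[OF s1 s2] s3] s4] s5] s6] s7])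
  then show ?thesis by (rule reach_mono) (use i in simp)
qed

end

context tj begin

lemma Dc_le: "n \<in> Dc \<Longrightarrow> n \<le> length Q" using ms by (simp add: Dc_def)

lemma swap_inj: assumes "inj_on c R" "x \<in> R" "y \<in> R" shows "inj_on (c(x := c y, y := c x)) R"
  unfolding inj_on_def
proof (intro ballI impI)
  fix u v assume uv: "u \<in> R" "v \<in> R" "(c(x := c y, y := c x)) u = (c(x := c y, y := c x)) v"
  have inj: "\<And>a b. a \<in> R \<Longrightarrow> b \<in> R \<Longrightarrow> c a = c b \<Longrightarrow> a = b" using assms(1) by (simp add: inj_on_def)
  show "u = v"
  proof (cases "x = y")
    case True then show ?thesis using uv inj by (auto split: if_splits)
  next
    case False
    then show ?thesis using uv inj assms(2,3) by (auto split: if_splits)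
  qed
qed

lemma swap_img: assumes "x \<in> S" "y \<in> S" shows "(c(x := c y, y := c x)) ` S = c ` S"
  using assms by (auto simp: image_iff)

lemma star_robot:
  assumes cinj: "inj_on c R" and cg: "\<forall>x\<in>R. c x \<in> V \<longleftrightarrow> x \<in> S" and cD: "c ` S = D"
    and t: "t \<in> S" "c t = vt m" and u: "u \<in> S" "u \<noteq> t"
  shows "reach E R c (c(t := c u, u := c t)) (2 * s + 3)"
proof -
  define C where "C y = (SOME n. n \<in> Dc \<and> c y = vt n)" for y
  have C1: "\<And>y. y \<in> S \<Longrightarrow> C y \<in> Dc \<and> c y = vt (C y)"
  proof -
    fix y assume "y \<in> S"
    then have "\<exists>n. n \<in> Dc \<and> c y = vt n" using cD unfolding D_def by auto
    then show "C y \<in> Dc \<and> c y = vt (C y)" unfolding C_def by (rule someI_ex)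
  qed
  have Cinj: "inj_on C S"
  proof (rule inj_onI)
    fix y y' assume "y \<in> S" "y' \<in> S" "C y = C y'"
    then have "c y = c y'" using C1 by metis
    then show "y = y'" using inj_onD[OF cinj] \<open>y \<in> S\<close> \<open>y' \<in> S\<close> SR by blast
  qed
  have CS: "C ` S = Dc"
  proof
    show "C ` S \<subseteq> Dc" using C1 by auto
    show "Dc \<subseteq> C ` S"
    proof
      fix n assume n: "n \<in> Dc"
      then have "vt n \<in> c ` S" using cD unfolding D_def by auto
      then obtain y where y: "y \<in> S" "c y = vt n" by auto
      then have "vt (C y) = vt n" using C1 by metis
      then have "C y = n" using vt_inj Dc_le C1 y n by metis
      then show "n \<in> C ` S" using y by auto
    qed
  qed
  interpret tjc E R S V Q b m s c C by unfold_locales (fact cg, fact Cinj, fact CS)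
  have Ct: "C t = m"
  proof -
    have "vt (C t) = vt m" using C1 t by metis
    moreover have "m \<in> Dc" using C1[OF t(1)] by (auto simp: Dc_def)
    ultimately show ?thesis using vt_inj Dc_le C1 t by metis
  qed
  have Cu: "C u \<in> Dc" "C u \<noteq> m" using C1 u Cinj t Ct by (auto simp: inj_on_def)
  define i where "i = m - C u"
  have i: "1 \<le> i" "i < s" "C u = m - i" using Cu sm unfolding i_def Dc_def by auto
  have st: "reach E R (cc id) (cc (id(m := m - i, m - i := m))) (2 * i + 3)" by (rule star[OF i(1,2)])
  have a1: "\<forall>y\<in>R. cc id y = c y" using C1 by (simp add: cf_def)
  have a2: "\<forall>y\<in>R. cc (id(m := m - i, m - i := m)) y = (c(t := c u, u := c t)) y"
  proof
    fix y assume "y \<in> R"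
    show "cc (id(m := m - i, m - i := m)) y = (c(t := c u, u := c t)) y"
    proof (cases "y \<in> S")
      case True
      then show ?thesis using C1[OF True] Ct i(3) C1[OF u(1)] t u Cinj
        by (auto simp: cf_def inj_on_def)
    next
      case False then show ?thesis using t u by (auto simp: cf_def)
    qed
  qed
  have "reach E R c (c(t := c u, u := c t)) (2 * i + 3)" by (rule reach_cong[OF st a1 a2])
  then show ?thesis by (rule reach_mono) (use i in simp)
qed

lemma swap_robots:
  assumes cinj: "inj_on c R" and cg: "\<forall>x\<in>R. c x \<in> V \<longleftrightarrow> x \<in> S" and cD: "c ` S = D"
    and xy: "x \<in> S" "y \<in> S" "x \<noteq> y"
  shows "reach E R c (c(x := c y, y := c x)) (3 * (2 * s + 3))"
proof -
  have s1: "1 \<le> s" using xy finS cardS by (metis One_nat_def Suc_leI card_gt_0_iff empty_iff)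
  have "vt m \<in> D" using s1 unfolding D_def Dc_def by auto
  then obtain t where t: "t \<in> S" "c t = vt m" using cD by (metis imageE)
  have xR: "x \<in> R" "y \<in> R" "t \<in> R" using xy t SR by auto
  have K: "2 * s + 3 \<le> 3 * (2 * s + 3)" by simp
  show ?thesis
  proof (cases "x = t")
    case True
    then show ?thesis using reach_mono[OF star_robot[OF cinj cg cD t xy(2)] K] xy by simp
  next
    case xt: False
    show ?thesis
    proof (cases "y = t")
      case True
      have "reach E R c (c(t := c x, x := c t)) (2 * s + 3)" using star_robot[OF cinj cg cD t xy(1) xt] .
      moreover have "\<forall>z\<in>R. (c(t := c x, x := c t)) z = (c(x := c y, y := c x)) z" using True by auto
      ultimately show ?thesis using reach_cong reach_mono[OF _ K] by blast
    next
      case yt: False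
      define c1 where "c1 = c(t := c x, x := c t)"
      have r1: "reach E R c c1 (2 * s + 3)" unfolding c1_def using star_robot[OF cinj cg cD t xy(1) xt] .
      have c1inj: "inj_on c1 R" unfolding c1_def by (rule swap_inj[OF cinj xR(3,1)])
      have c1g: "\<forall>z\<in>R. c1 z \<in> V \<longleftrightarrow> z \<in> S"
      proof
        fix z assume z: "z \<in> R"
        show "c1 z \<in> V \<longleftrightarrow> z \<in> S"
          using cg[rule_format, OF z] cg[rule_format, OF xR(1)] cg[rule_format, OF xR(3)] xy(1) t(1)
          unfolding c1_def by auto
      qed
      have c1D: "c1 ` S = D" unfolding c1_def swap_img[OF t(1) xy(1)] by (rule cD)
      have c1x: "c1 x = vt m" using t xt unfolding c1_def by simp
      define c2 where "c2 = c1(x := c1 y, y := c1 x)"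
      have r2: "reach E R c1 c2 (2 * s + 3)" unfolding c2_def
        using star_robot[OF c1inj c1g c1D xy(1) c1x xy(2)] xy(3) by simp
      have c2inj: "inj_on c2 R" unfolding c2_def by (rule swap_inj[OF c1inj xR(1,2)])
      have c2g: "\<forall>z\<in>R. c2 z \<in> V \<longleftrightarrow> z \<in> S"
      proof
        fix z assume z: "z \<in> R"
        show "c2 z \<in> V \<longleftrightarrow> z \<in> S"
          using c1g[rule_format, OF z] c1g[rule_format, OF xR(1)] c1g[rule_format, OF xR(2)] xy(1,2)
          unfolding c2_def by auto
      qed
      have c2D: "c2 ` S = D" unfolding c2_def swap_img[OF xy(1,2)] by (rule c1D)
      have c2y: "c2 y = vt m" using c1x xy unfolding c2_def by simp
      define c3 where "c3 = c2(y := c2 t, t := c2 y)"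
      have r3: "reach E R c2 c3 (2 * s + 3)" unfolding c3_def
        using star_robot[OF c2inj c2g c2D xy(2) c2y t(1)] yt by simp
      have "reach E R c c3 ((2 * s + 3) + (2 * s + 3) + (2 * s + 3))" by (rule reach_trans[OF reach_trans[OF r1 r2] r3])
      moreover have "\<forall>z\<in>R. c3 z = (c(x := c y, y := c x)) z"
        using xt yt xy t unfolding c3_def c2_def c1_def by auto
      ultimately show ?thesis using reach_cong by fastforce
    qed
  qed
qed

lemma perm_aux:
  assumes "inj_on c R" "\<forall>x\<in>R. c x \<in> V \<longleftrightarrow> x \<in> S" "c ` S = D"
    "c' ` S = D" "\<forall>x\<in>R-S. c' x = c x" "inj_on c' R"
  shows "reach E R c c' (card {x\<in>S. c x \<noteq> c' x} * (3 * (2 * s + 3)))"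
  using assms
proof (induction "card {x\<in>S. c x \<noteq> c' x}" arbitrary: c rule: less_induct)
  case less
  show ?case
  proof (cases "{x\<in>S. c x \<noteq> c' x} = {}")
    case True
    have "\<forall>x\<in>R. c x = c' x"
    proof
      fix z assume "z \<in> R"
      show "c z = c' z" using True less.prems(5) \<open>z \<in> R\<close> by (cases "z \<in> S") auto
    qed
    then show ?thesis using reach_cong[OF reach_refl] True by (metis card.empty mult_0)
  next
    case False
    then obtain x where x: "x \<in> S" "c x \<noteq> c' x" by auto
    have "c' x \<in> c ` S" using less.prems(3,4) x by auto
    then obtain y where y: "y \<in> S" "c y = c' x" by auto
    have xy: "x \<noteq> y" using x y by auto
    define c1 where "c1 = c(x := c y, y := c x)"
    have r1: "reach E R c c1 (3 * (2 * s + 3))" unfolding c1_def by (rule swap_robots[OF less.prems(1-3) x(1) y(1) xy])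
    have xR: "x \<in> R" "y \<in> R" using x y SR by auto
    have c1inj: "inj_on c1 R" unfolding c1_def by (rule swap_inj[OF less.prems(1) xR])
    have c1g: "\<forall>z\<in>R. c1 z \<in> V \<longleftrightarrow> z \<in> S"
    proof
      fix z assume z: "z \<in> R"
      show "c1 z \<in> V \<longleftrightarrow> z \<in> S"
        using less.prems(2)[rule_format, OF z] less.prems(2)[rule_format, OF xR(1)] less.prems(2)[rule_format, OF xR(2)] x(1) y(1)
        unfolding c1_def by auto
    qed
    have c1D: "c1 ` S = D" unfolding c1_def swap_img[OF x(1) y(1)] by (rule less.prems(3))
    have c1RS: "\<forall>z\<in>R-S. c' z = c1 z" using less.prems(5) x y unfolding c1_def by auto
    have sub: "{z\<in>S. c1 z \<noteq> c' z} \<subseteq> {z\<in>S. c z \<noteq> c' z} - {x}"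
    proof -
      have "c' y \<noteq> c' x" using inj_onD[OF less.prems(6)] xR xy by metis
      then show ?thesis using x y xy unfolding c1_def by auto
    qed
    have fin: "finite {z\<in>S. c z \<noteq> c' z}" using finS by simp
    have lt: "card {z\<in>S. c1 z \<noteq> c' z} < card {z\<in>S. c z \<noteq> c' z}"
    proof -
      have "card {z\<in>S. c1 z \<noteq> c' z} \<le> card ({z\<in>S. c z \<noteq> c' z} - {x})" using sub fin
        by (meson card_mono finite_Diff)
      also have "... < card {z\<in>S. c z \<noteq> c' z}" using fin x by (intro card_Diff1_less) auto
      finally show ?thesis .
    qed
    have r2: "reach E R c1 c' (card {z\<in>S. c1 z \<noteq> c' z} * (3 * (2 * s + 3)))"
      by (rule less.hyps[OF lt c1inj c1g c1D less.prems(4) c1RS less.prems(6)])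
    have "3 * (2 * s + 3) + card {z\<in>S. c1 z \<noteq> c' z} * (3 * (2 * s + 3)) \<le> card {z\<in>S. c z \<noteq> c' z} * (3 * (2 * s + 3))"
    proof -
      have "Suc (card {z\<in>S. c1 z \<noteq> c' z}) \<le> card {z\<in>S. c z \<noteq> c' z}" using lt by simp
      then have "Suc (card {z\<in>S. c1 z \<noteq> c' z}) * (3 * (2 * s + 3)) \<le> card {z\<in>S. c z \<noteq> c' z} * (3 * (2 * s + 3))"
        by (rule mult_le_mono1)
      then show ?thesis by simp
    qed
    then show ?thesis using reach_mono[OF reach_trans[OF r1 r2]] by blast
  qed
qed

lemma perm:
  assumes "inj_on c R" "\<forall>x\<in>R. c x \<in> V \<longleftrightarrow> x \<in> S" "c ` S = D"
    "c' ` S = D" "\<forall>x\<in>R-S. c' x = c x" "inj_on c' R"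
  shows "reach E R c c' (s * (3 * (2 * s + 3)))"
proof -
  have "card {x\<in>S. c x \<noteq> c' x} \<le> s" using cardS finS by (metis (no_types, lifting) card_mono mem_Collect_eq subsetI)
  then show ?thesis using reach_mono[OF perm_aux[OF assms]] mult_le_mono1 by blast
qed

lemma card_Dc: "card Dc = s" using sm by (simp add: Dc_def)

lemma D_props: "D \<subseteq> V" "card D = s"
proof -
  show "D \<subseteq> V" unfolding D_def using Dc_le vt_V by auto
  have "inj_on vt Dc" using Dc_le vt_inj by (auto simp: inj_on_def)
  then show "card D = s" unfolding D_def using card_Dc by (simp add: card_image)
qed

lemma reconf:
  assumes conn: "connected_graph V E" and finV: "finite V"
    and c: "inj_on c R" "\<forall>x\<in>R. c x \<in> V \<longleftrightarrow> x \<in> S"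
    and c': "inj_on c' R" "\<forall>x\<in>R. c' x \<in> V \<longleftrightarrow> x \<in> S" "\<forall>x\<in>R-S. c' x = c x"
  shows "reach E R c c' (s * card V + s * (3 * (2 * s + 3)) + s * card V)"
proof -
  obtain c1 where c1: "reach E R c c1 (card S * card V)" "inj_on c1 R" "\<forall>x\<in>R. c1 x \<in> V \<longleftrightarrow> x \<in> S" "c1 ` S = D" "\<forall>x\<in>R-S. c1 x = c x"
    using gather[OF conn finV finS SR c D_props(1)] D_props(2) cardS by auto
  obtain c2 where c2: "reach E R c' c2 (card S * card V)" "inj_on c2 R" "\<forall>x\<in>R. c2 x \<in> V \<longleftrightarrow> x \<in> S" "c2 ` S = D" "\<forall>x\<in>R-S. c2 x = c' x"
    using gather[OF conn finV finS SR c'(1,2) D_props(1)] D_props(2) cardS by auto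
  have "\<forall>x\<in>R-S. c2 x = c1 x" using c1(5) c2(5) c'(3) by simp
  then have r: "reach E R c1 c2 (s * (3 * (2 * s + 3)))" by (rule perm[OF c1(2,3,4) c2(4) _ c2(2)])
  have "reach E R c2 c' (card S * card V)" by (rule reach_sym[OF c2(1)])
  then show ?thesis using reach_trans[OF reach_trans[OF c1(1) r]] cardS by simp
qed

end

lemma is_path_append:
  assumes "is_path E p1" "is_path E p2" "set p1 \<inter> set p2 = {}" "{last p1, hd p2} \<in> E"
  shows "is_path E (p1 @ p2)"
  unfolding is_path_def
proof (intro conjI allI impI)
  have ne: "p1 \<noteq> []" "p2 \<noteq> []" using assms(1,2) by (auto simp: is_path_def)
  show "p1 @ p2 \<noteq> []" using ne by simp
  show "distinct (p1 @ p2)" using assms(1-3) by (simp add: is_path_def)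
  fix i assume i: "Suc i < length (p1 @ p2)"
  consider "Suc i < length p1" | "Suc i = length p1" | "length p1 \<le> i" by linarith
  then show "{(p1 @ p2) ! i, (p1 @ p2) ! Suc i} \<in> E"
  proof cases
    case 1 then show ?thesis using assms(1) by (simp add: is_path_def nth_append)
  next
    case 2
    then have ii: "i = length p1 - 1" by simp
    have "(p1 @ p2) ! i = last p1" using ii ne by (simp add: nth_append last_conv_nth)
    moreover have "(p1 @ p2) ! Suc i = hd p2" using 2 ne by (simp add: nth_append hd_conv_nth)
    ultimately show ?thesis using assms(4) by simp
  next
    case 3
    then have "Suc (i - length p1) < length p2" using i by simp
    then have "{p2 ! (i - length p1), p2 ! Suc (i - length p1)} \<in> E" using assms(2) by (simp add: is_path_def)
    moreover have "Suc i - length p1 = Suc (i - length p1)" using 3 by simp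
    ultimately show ?thesis using 3 by (simp add: nth_append)
  qed
qed

lemma nth_in_take: "distinct P \<Longrightarrow> a < length P \<Longrightarrow> (P ! a \<in> set (take k P)) = (a < k)"
  by (auto simp: in_set_conv_nth nth_eq_iff_index_eq)

lemma nth_in_drop: "distinct P \<Longrightarrow> a < length P \<Longrightarrow> (P ! a \<in> set (drop k P)) = (k \<le> a)"
proof
  assume d: "distinct P" "a < length P" "P ! a \<in> set (drop k P)"
  then obtain l where l: "l < length P - k" "P ! a = drop k P ! l" by (auto simp: in_set_conv_nth)
  then have "P ! a = P ! (k + l)" by simp
  then have "a = k + l" using d l nth_eq_iff_index_eq by fastforce
  then show "k \<le> a" by simp
next
  assume a: "distinct P" "a < length P" "k \<le> a"
  then have "a - k < length (drop k P)" by simp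
  then have "drop k P ! (a - k) \<in> set (drop k P)" by (rule nth_mem)
  moreover have "drop k P ! (a - k) = P ! a" using a by simp
  ultimately show "P ! a \<in> set (drop k P)" by simp
qed

lemma junction_right:
  assumes P: "is_path E P" and L: "L \<le> j" "j + 2 * L < length P" "1 \<le> L"
    and z: "{P ! j, z} \<in> E" "z \<noteq> P ! j" "z \<noteq> P ! Suc j"
    and zr: "\<And>t. t < length P \<Longrightarrow> P ! t = z \<Longrightarrow> j < t"
  shows "\<exists>Q m bb. is_path E Q \<and> bb \<notin> set Q \<and> {Q ! m, bb} \<in> E \<and> L \<le> m \<and> m + L < length Q"
proof (cases "z \<in> set P")
  case False
  then show ?thesis using P L z by (intro exI[of _ P] exI[of _ j] exI[of _ z]) auto
next
  case True
  have dP: "distinct P" using P by (simp add: is_path_def)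
  obtain t where t: "t < length P" "P ! t = z" using True by (auto simp: in_set_conv_nth)
  have tj: "j + 2 \<le> t"
  proof -
    have "j < t" by (rule zr[OF t])
    moreover have "t \<noteq> Suc j" using t z(3) by auto
    ultimately show ?thesis by simp
  qed
  show ?thesis
  proof (cases "j + L < t")
    case True
    have "is_path E (take t P)" using P tj by (intro is_path_take) auto
    moreover have "z \<notin> set (take t P)" using t nth_in_take[OF dP t(1)] by simp
    moreover have "{take t P ! j, z} \<in> E" using z(1) tj by simp
    ultimately show ?thesis using True t L by (intro exI[of _ "take t P"] exI[of _ j] exI[of _ z]) auto
  next
    case False
    define Q where "Q = take (Suc j) P @ drop t P"
    have p1: "is_path E (take (Suc j) P)" using P by (intro is_path_take) auto
    have p2: "is_path E (drop t P)" using P t by (intro is_path_drop) auto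
    have disj: "set (take (Suc j) P) \<inter> set (drop t P) = {}"
      using set_take_disj_set_drop_if_distinct[OF dP, of "Suc j" t] tj by simp
    have lst: "last (take (Suc j) P) = P ! j" using tj t by (simp add: take_Suc_conv_app_nth)
    have hdd: "hd (drop t P) = z" using t by (simp add: hd_drop_conv_nth)
    have Qp: "is_path E Q" unfolding Q_def using is_path_append[OF p1 p2 disj] lst hdd z(1) by simp
    have jl: "Suc j < length P" using tj t by simp
    have bq: "P ! Suc j \<notin> set Q" unfolding Q_def
      using nth_in_take[OF dP jl, of "Suc j"] nth_in_drop[OF dP jl, of t] tj by simp
    have Qm: "Q ! j = P ! j" unfolding Q_def using jl by (simp add: nth_append)
    have e: "{Q ! j, P ! Suc j} \<in> E" using Qm P jl by (simp add: is_path_def)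
    have len: "j + L < length Q" unfolding Q_def using False L t jl by simp
    show ?thesis using Qp bq e len L by blast
  qed
qed

lemma junction:
  assumes P: "is_path E P" and L: "2 * L \<le> j" "j + 2 * L < length P" "1 \<le> L"
    and z: "{P ! j, z} \<in> E" "z \<noteq> P ! j" "z \<noteq> P ! Suc j" "z \<noteq> P ! (j - 1)"
  shows "\<exists>Q m bb. is_path E Q \<and> bb \<notin> set Q \<and> {Q ! m, bb} \<in> E \<and> L \<le> m \<and> m + L < length Q"
proof (cases "\<forall>t. t < length P \<longrightarrow> P ! t = z \<longrightarrow> j < t")
  case True
  then show ?thesis using junction_right[OF P _ L(2,3) z(1-3)] L by auto
next
  case False
  then obtain t where t: "t < length P" "P ! t = z" "t \<le> j" by auto
  define n where "n = length P"
  define j' where "j' = n - 1 - j"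
  have dP: "distinct P" using P by (simp add: is_path_def)
  have tj: "t < j" using t z(2) by (cases "t = j") auto
  have rP: "is_path E (rev P)" by (rule is_path_rev[OF P])
  have r1: "rev P ! j' = P ! j" using L unfolding j'_def n_def by (simp add: rev_nth)
  have r2: "rev P ! Suc j' = P ! (j - 1)" using L unfolding j'_def n_def
    by (simp add: rev_nth Suc_diff_Suc)
  have zr: "\<And>t'. t' < length (rev P) \<Longrightarrow> rev P ! t' = z \<Longrightarrow> j' < t'"
  proof -
    fix t' assume t': "t' < length (rev P)" "rev P ! t' = z"
    then have "P ! (n - Suc t') = P ! t" using t by (simp add: rev_nth n_def)
    moreover have "n - Suc t' < length P" using t' n_def by simp
    ultimately have "n - Suc t' = t" using nth_eq_iff_index_eq[OF dP, of "n - Suc t'" t] t by simp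
    moreover have "t' < length P" using t'(1) by simp
    moreover have "j < length P" using L by simp
    ultimately show "j' < t'" using tj unfolding j'_def n_def by presburger
  qed
  have L': "L \<le> j'" "j' + 2 * L < length (rev P)" using L unfolding j'_def n_def by auto
  show ?thesis
    by (rule junction_right[OF rP L' L(3) _ _ _ zr]) (use z r1 r2 in auto)
qed

lemma path_verts: "is_path E p \<Longrightarrow> 2 \<le> length p \<Longrightarrow> set p \<subseteq> \<Union>E"
proof
  fix v assume p: "is_path E p" "2 \<le> length p" and v: "v \<in> set p"
  then obtain i where i: "i < length p" "p ! i = v" by (auto simp: in_set_conv_nth)
  show "v \<in> \<Union>E"
  proof (cases "Suc i < length p")
    case True
    then have "{p ! i, p ! Suc i} \<in> E" using p by (simp add: is_path_def)
    then show ?thesis using i by auto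
  next
    case False
    then have si: "Suc (i - 1) < length p" "Suc (i - 1) = i" using i p(2) by auto
    then have "{p ! (i - 1), p ! Suc (i - 1)} \<in> E" using p(1) unfolding is_path_def by blast
    then have "{p ! (i - 1), p ! i} \<in> E" using si(2) by simp
    then show ?thesis using i by auto
  qed
qed

lemma theta_q: "(\<lambda>k. real (12 * (k + 1) ^ 2)) \<in> \<Theta>(\<lambda>k. real k ^ 2)"
  by real_asymp

lemma card_path_edges: "card (path_edges P) \<le> length P - 1"
proof -
  have "path_edges P \<subseteq> (\<lambda>i. {P ! i, P ! Suc i}) ` {..<length P - 1}"
    unfolding path_edges_def by auto
  then have "card (path_edges P) \<le> card ((\<lambda>i. {P ! i, P ! Suc i}) ` {..<length P - 1})"
    by (rule card_mono[OF finite_imageI[OF finite_lessThan]])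
  also have "... \<le> card {..<length P - 1}" by (rule card_image_le) simp
  finally show ?thesis by simp
qed

lemma path_edges_sub: "is_path E P \<Longrightarrow> path_edges P \<subseteq> E"
  unfolding path_edges_def is_path_def by auto

lemma is_path_mono: "is_path E P \<Longrightarrow> path_edges P \<subseteq> E' \<Longrightarrow> is_path E' P"
  unfolding path_edges_def is_path_def by blast

lemma nat_bound:
  fixes k s cV :: nat
  assumes k: "1 \<le> k" and s: "s \<le> k" and cV: "cV \<le> 2 * (2 * k) * (12 * (k + 1) ^ 2 + 3)"
  shows "s * cV + s * (3 * (2 * s + 3)) + s * cV \<le> 500 * k ^ 7"
proof -
  have kk: "k \<le> k * k" using k by simp
  have a: "(k + 1) ^ 2 \<le> 4 * k ^ 2"
  proof -
    have "(k + 1) ^ 2 = k * k + 2 * k + 1" by (simp add: power2_eq_square algebra_simps)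
    moreover have "4 * k ^ 2 = 4 * (k * k)" by (simp add: power2_eq_square)
    ultimately show ?thesis using kk k by linarith
  qed
  have b: "12 * (k + 1) ^ 2 + 3 \<le> 51 * k ^ 2"
  proof -
    have "(k + 1) ^ 2 = k * k + 2 * k + 1" by (simp add: power2_eq_square algebra_simps)
    moreover have "51 * k ^ 2 = 51 * (k * k)" by (simp add: power2_eq_square)
    ultimately show ?thesis using kk k by linarith
  qed
  have c: "cV \<le> 204 * k ^ 3"
  proof -
    have "2 * (2 * k) * (12 * (k + 1) ^ 2 + 3) \<le> 2 * (2 * k) * (51 * k ^ 2)" using b by (rule mult_le_mono2)
    also have "... = 204 * k ^ 3" by (simp add: power2_eq_square power3_eq_cube)
    finally show ?thesis using cV by simp
  qed
  have d: "s * cV \<le> k * (204 * k ^ 3)" using s c by (rule mult_le_mono)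
  have e: "s * (3 * (2 * s + 3)) \<le> k * (3 * (2 * k + 3))" using s by (intro mult_le_mono) auto
  have f: "k * (3 * (2 * k + 3)) \<le> 15 * k ^ 4"
  proof -
    have "k \<le> k ^ 4" using k by (simp add: self_le_power)
    moreover have "k ^ 2 \<le> k ^ 4" using k by (intro power_increasing) auto
    then have "k * k \<le> k ^ 4" by (simp add: power2_eq_square)
    moreover have "k * (3 * (2 * k + 3)) = 6 * (k * k) + 9 * k" by (simp add: algebra_simps)
    ultimately show ?thesis by linarith
  qed
  have g: "k ^ 4 \<le> k ^ 7" using k by (simp add: power_increasing)
  have "s * cV + s * (3 * (2 * s + 3)) + s * cV \<le> 408 * k ^ 4 + 15 * k ^ 4"
  proof -
    have "k ^ 4 = k ^ (1 + 3)" by simp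
    also have "... = k * k ^ 3" by (simp only: power_add power_one_right)
    finally have "k * (204 * k ^ 3) = 204 * k ^ 4" by (simp only: mult.left_commute)
    then show ?thesis using d e f by linarith
  qed
  also have "... \<le> 500 * k ^ 7" using g by simp
  finally show ?thesis .
qed

lemma main_fixed:
  fixes V :: "nat set" and E :: "nat set set" and R :: "nat set" and pos :: "nat \<Rightarrow> nat" and r :: nat
    and V' :: "nat set" and E' :: "nat set set" and S :: "nat set" and \<iota>' :: "nat \<Rightarrow> nat"
  assumes G: "graph V E" and finR: "finite R" and posinj: "inj_on pos R" and posV: "pos ` R \<subseteq> V"
    and MH: "meta_haven V E r (12 * (card R + 1) ^ 2) V' E'" and rk: "r \<le> 2 * card R"
    and SR: "S \<subseteq> R" and posS: "\<forall>x\<in>R. pos x \<in> V' \<longleftrightarrow> x \<in> S"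
    and iinj: "inj_on \<iota>' S" and iV: "\<iota>' ` S \<subseteq> V'"
  shows "\<exists>cs. move_sequence E' R cs \<and> hd cs = pos \<and> (\<forall>x\<in>S. last cs x = \<iota>' x) \<and>
              real (length cs - 1) \<le> 500 * real (card R) ^ 7"
proof (cases "S = {}")
  case True
  then show ?thesis by (intro exI[of _ "[pos]"]) (auto simp: move_sequence_def)
next
  case Sne: False
  define k where "k = card R"
  define qq where "qq = 12 * (k + 1) ^ 2"
  obtain hs where hs: "length hs = r"
    "\<forall>(w, P, T) \<in> set hs. hat_haven_edges E qq w P T (path_edges P \<union> T)"
    "E' = (\<Union>(w, P, T) \<in> set hs. path_edges P \<union> T)" and V'E': "V' = \<Union>E'" and conn: "connected_graph V' E'"
    using MH unfolding meta_haven_def qq_def k_def by blast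
  have finS: "finite S" using finR SR finite_subset by blast
  have sk: "card S \<le> k" unfolding k_def using card_mono[OF finR SR] .
  have "0 < card S" using Sne finS by (simp add: card_gt_0_iff)
  then have k1: "1 \<le> k" using sk by linarith
  obtain x0 where x0: "x0 \<in> S" using Sne by auto
  have "pos x0 \<in> V'" using posS x0 SR by auto
  then have "E' \<noteq> {}" using V'E' by auto
  then have hsne: "hs \<noteq> []" using hs(3) by auto
  obtain w P T where wPT: "hs ! 0 = (w, P, T)" by (cases "hs ! 0") auto
  have "hs ! 0 \<in> set hs" using hsne by (simp add: nth_mem)
  then have inhs: "(w, P, T) \<in> set hs" using wPT by simp
  have hat: "hat_haven_edges E qq w P T (path_edges P \<union> T)" using hs(2) inhs by auto
  have sub1: "path_edges P \<union> T \<subseteq> E'" using hs(3) inhs by blast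
  have E'E: "E' \<subseteq> E"
  proof
    fix e assume "e \<in> E'"
    then obtain w' P' T' where h': "(w', P', T') \<in> set hs" "e \<in> path_edges P' \<union> T'" using hs(3) by auto
    have "hat_haven_edges E qq w' P' T' (path_edges P' \<union> T')" using hs(2) h'(1) by auto
    then have "is_path E P'" "T' \<subseteq> E"
      unfolding hat_haven_edges_def strong_haven_def haven_for_def haven_def by auto
    then show "e \<in> E" using h'(2) path_edges_sub by blast
  qed
  have finV: "finite V" using G by (simp add: graph_def)
  have edgeV: "\<And>e. e \<in> E \<Longrightarrow> e \<subseteq> V \<and> card e \<le> 2"
  proof -
    fix e assume "e \<in> E"
    then obtain u v where "u \<in> V" "v \<in> V" "e = {u, v}" using G unfolding graph_def by blast
    then show "e \<subseteq> V \<and> card e \<le> 2" by (cases "u = v") auto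
  qed
  have V'V: "V' \<subseteq> V" using V'E' E'E edgeV by blast
  have finV': "finite V'" using finite_subset[OF V'V finV] .
  have cE': "card E' \<le> r * (qq + 3)"
  proof -
    have "card E' \<le> (\<Sum>h\<in>set hs. card ((\<lambda>(w, P, T). path_edges P \<union> T) h))"
      unfolding hs(3) by (rule card_UN_le) simp
    also have "... \<le> of_nat (card (set hs)) * (qq + 3)"
    proof (rule sum_bounded_above)
      fix h assume h: "h \<in> set hs"
      obtain w' P' T' where hh: "h = (w', P', T')" by (cases h) auto
      have "hat_haven_edges E qq w' P' T' (path_edges P' \<union> T')" using hs(2) h hh by auto
      then have "length P' = qq + 1" "card T' = 3"
        unfolding hat_haven_edges_def strong_haven_def haven_for_def haven_def by auto
      then have "card (path_edges P' \<union> T') \<le> qq + 3"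
        using card_path_edges[of P'] card_Un_le[of "path_edges P'" T'] by simp
      then show "card ((\<lambda>(w, P, T). path_edges P \<union> T) h) \<le> qq + 3" using hh by simp
    qed
    also have "... \<le> r * (qq + 3)" using hs(1) card_length[of hs] by (simp add: mult_le_mono1)
    finally show ?thesis .
  qed
  have cV': "card V' \<le> 2 * (2 * k) * (12 * (k + 1) ^ 2 + 3)"
  proof -
    have "card V' \<le> sum card E'" unfolding V'E' by (rule card_Union_le_sum_card)
    also have "... \<le> card E' * 2" using sum_bounded_above[of E' card 2] edgeV E'E by auto
    also have "... \<le> r * (qq + 3) * 2" using cE' by simp
    also have "... \<le> 2 * k * (qq + 3) * 2" using rk unfolding k_def by (intro mult_le_mono1) simp
    finally show ?thesis unfolding qq_def by (simp add: algebra_simps)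
  qed
  have sh: "strong_haven E qq w P" and TE: "T \<subseteq> E" and cT: "card T = 3" and Tw: "\<forall>e\<in>T. w \<in> e"
    using hat unfolding hat_haven_edges_def by auto
  have Ppath: "is_path E P" and lenP: "length P = qq + 1"
    using sh unfolding strong_haven_def haven_for_def haven_def by auto
  have dP: "distinct P" using Ppath by (simp add: is_path_def)
  have Pne: "P \<noteq> []" using lenP by auto
  obtain d1 i1 j where h1: "i1 < length P" "j < length P" "P ! i1 = hd P" "P ! j = w"
    "d1 = (if i1 \<le> j then j - i1 else i1 - j)" "(qq + 2) div 3 \<le> d1"
    using sh unfolding strong_haven_def haven_for_def path_dist_def by blast
  obtain d2 i2 j2 where h2: "i2 < length P" "j2 < length P" "P ! i2 = last P" "P ! j2 = w"
    "d2 = (if i2 \<le> j2 then j2 - i2 else i2 - j2)" "(qq + 2) div 3 \<le> d2"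
    using sh unfolding strong_haven_def haven_for_def path_dist_def by blast
  have "i1 = 0" using h1(1,3) nth_eq_iff_index_eq[OF dP, of i1 0] Pne by (simp add: hd_conv_nth)
  then have jd: "(qq + 2) div 3 \<le> j" using h1 by simp
  have "i2 = qq" using h2(1,3) nth_eq_iff_index_eq[OF dP, of i2 qq] Pne lenP by (simp add: last_conv_nth)
  moreover have "j2 = j" using h1(2,4) h2(2,4) nth_eq_iff_index_eq[OF dP, of j2 j] by simp
  ultimately have jd2: "(qq + 2) div 3 \<le> qq - j" using h2 h1(2) lenP by (auto split: if_splits)
  define X where "X = (k + 1) ^ 2"
  have X1: "k + 1 \<le> X" unfolding X_def by (simp add: power2_eq_square)
  have qqX: "qq = 12 * X" unfolding qq_def X_def by simp
  have div: "(qq + 2) div 3 = 4 * X" unfolding qqX by presburger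
  have jL: "2 * k \<le> j" "j + 2 * k < length P" using jd jd2 div X1 lenP by auto
  have j1: "1 \<le> j" using jL k1 by simp
  have "\<not> T \<subseteq> {{w, P ! (j - 1)}, {w, P ! Suc j}}"
  proof
    assume "T \<subseteq> {{w, P ! (j - 1)}, {w, P ! Suc j}}"
    then have "card T \<le> card {{w, P ! (j - 1)}, {w, P ! Suc j}}" by (rule card_mono[rotated]) simp
    also have "... \<le> 2" by (simp add: card_insert_le_m1)
    finally show False using cT by simp
  qed
  then obtain e where e: "e \<in> T" "e \<noteq> {w, P ! (j - 1)}" "e \<noteq> {w, P ! Suc j}" by auto
  obtain u v where uv: "u \<noteq> v" "e = {u, v}" using G e(1) TE unfolding graph_def by blast
  define z where "z = (if u = w then v else u)"
  have ez: "e = {w, z}" "z \<noteq> w" using uv Tw e(1) unfolding z_def by auto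
  have P'path: "is_path E' P" by (rule is_path_mono[OF Ppath]) (use sub1 in auto)
  have zc: "{P ! j, z} \<in> E'" "z \<noteq> P ! j" "z \<noteq> P ! Suc j" "z \<noteq> P ! (j - 1)"
    using ez e sub1 h1(4) by auto
  obtain Q m bb where Q: "is_path E' Q" "bb \<notin> set Q" "{Q ! m, bb} \<in> E'" "k \<le> m" "m + k < length Q"
    using junction[OF P'path jL k1 zc] by blast
  have QV: "set Q \<subseteq> V'" using path_verts[OF Q(1)] Q(4,5) k1 V'E' by simp
  have bV: "bb \<in> V'" using Q(3) V'E' by auto
  have sm: "card S \<le> m" using sk Q(4) by simp
  have ms: "m + card S < length Q" using sk Q(5) by simp
  interpret T: tj E' R S V' Q bb m "card S"
    by (rule tj.intro[OF Q(1,2,3) sm ms QV bV SR finS refl])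
  define c' where "c' x = (if x \<in> S then \<iota>' x else pos x)" for x
  have c'g: "\<forall>x\<in>R. c' x \<in> V' \<longleftrightarrow> x \<in> S" using posS iV unfolding c'_def by auto
  have c'inj: "inj_on c' R"
  proof (rule inj_onI)
    fix x y assume xy: "x \<in> R" "y \<in> R" "c' x = c' y"
    show "x = y"
    proof (cases "x \<in> S"; cases "y \<in> S")
      assume "x \<in> S" "y \<in> S" then show ?thesis using xy iinj unfolding c'_def by (auto dest: inj_onD)
    next
      assume "x \<notin> S" "y \<notin> S" then show ?thesis using xy posinj unfolding c'_def by (auto dest: inj_onD)
    next
      assume a: "x \<in> S" "y \<notin> S"
      have "c' x \<in> V'" using c'g xy(1) a(1) by blast
      moreover have "c' y \<notin> V'" using c'g xy(2) a(2) by blast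
      ultimately show ?thesis using xy(3) by simp
    next
      assume a: "x \<notin> S" "y \<in> S"
      have "c' y \<in> V'" using c'g xy(2) a(2) by blast
      moreover have "c' x \<notin> V'" using c'g xy(1) a(1) by blast
      ultimately show ?thesis using xy(3) by simp
    qed
  qed
  have c'RS: "\<forall>x\<in>R-S. c' x = pos x" unfolding c'_def by auto
  have r: "reach E' R pos c' (card S * card V' + card S * (3 * (2 * card S + 3)) + card S * card V')"
    by (rule T.reconf[OF conn finV' posinj posS c'inj c'g c'RS])
  obtain cs where cs: "move_sequence E' R cs" "hd cs = pos" "\<forall>x\<in>R. last cs x = c' x"
    "length cs - 1 \<le> card S * card V' + card S * (3 * (2 * card S + 3)) + card S * card V'"
    using reach_seq[OF r] by blast
  have "length cs - 1 \<le> 500 * k ^ 7" using le_trans[OF cs(4) nat_bound[OF k1 sk cV']] .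
  then have "real (length cs - 1) \<le> real (500 * k ^ 7)" by (simp only: of_nat_le_iff)
  then have "real (length cs - 1) \<le> 500 * real (card R) ^ 7" unfolding k_def by simp
  moreover have "\<forall>x\<in>S. last cs x = \<iota>' x" using cs(3) SR unfolding c'_def by auto
  ultimately show ?thesis using cs(1,2) by blast
qed

theorem mainTheorem10:
  "\<exists>q :: nat \<Rightarrow> nat. (\<lambda>k. real (q k)) \<in> \<Theta>(\<lambda>k. real k ^ 2) \<and>
   (\<exists>C :: real.
     \<forall>(V :: nat set) (E :: nat set set) (R :: nat set) (pos :: nat \<Rightarrow> nat) (r :: nat) V' E'
       (S :: nat set) (\<iota>' :: nat \<Rightarrow> nat).
       graph V E \<and> finite R \<and> inj_on pos R \<and> pos ` R \<subseteq> V \<and>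
       meta_haven V E r (q (card R)) V' E' \<and> r \<le> 2 * card R \<and>
       S \<subseteq> R \<and> (\<forall>x\<in>R. pos x \<in> V' \<longleftrightarrow> x \<in> S) \<and>
       inj_on \<iota>' S \<and> \<iota>' ` S \<subseteq> V'
       \<longrightarrow> (\<exists>cs. move_sequence E' R cs \<and> hd cs = pos \<and> (\<forall>x\<in>S. last cs x = \<iota>' x) \<and>
              real (length cs - 1) \<le> C * real (card R) ^ 7))"
  apply (rule exI[of _ "\<lambda>k. 12 * (k + 1) ^ 2"])
  apply (intro conjI theta_q exI[of _ 500] allI impI)
  apply (elim conjE)
  apply (rule main_fixed; assumption)
  done

end
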